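(* Let $n\ge1$, $s\in(0,1)$, $p\in(1,\infty)$, $q$ with $p-1<q\le\max\{\frac{p+1}{2},\frac{2p-1}{2}\}$, and let $\psi\in C^\infty_c(B_{3/4})$ with $\psi\equiv1$ on $B_{5/8}$. Then for every $u:\mathbb{R}^n\to\mathbb{R}$ with $[u]_{M^{p,0}(B_1)}<\infty$, $$[(u-(u)_{B_1})\psi]_{BMO(\mathbb{R}^n)}\le c\left([u]_{BMO(B_1)}+[u]_{M^{p,0}(B_1)}\right)$$ with $c$ depending only on $n,s,p$ and $\psi$.
   Context: $[f]_{BMO(U)}=\sup_{B_r(z)\subset U}\fint_{B_r(z)}|f-(f)_{B_r(z)}|$. $d_su(x,y)=\frac{u(x)-u(y)}{|x-y|^s}$; $\mathrm{Tail}_q(v;B_R(x_0))=\left(R^{sp}\int_{\mathbb{R}^n\setminus B_R(x_0)}\frac{|v(y)|^q}{|y-x_0|^{n+sp}}dy\right)^{1/q}$; $\mathcal{E}(u;B_R(x_0))=R^{sp}\frac{1}{|B_R|}\int_{B_R(x_0)}\int_{B_R(x_0)}|d_su|^p\frac{dxdy}{|x-y|^n}+\mathrm{Tail}_q(u-(u)_{B_R(x_0)};B_R(x_0))^p$; $[u]_{M^{p,\lambda}(B_R(x_0))}=\sup_{B_\rho(z)\subset B_R(x_0)}(\rho^{-\lambda}\mathcal{E}(u;B_\rho(z)))^{1/p}$. *)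

theory Defs
  imports "HOL-Analysis.Analysis"
begin

coinductive smooth_fun :: "('a::euclidean_space \<Rightarrow> real) \<Rightarrow> bool" where
  "f differentiable_on UNIV \<Longrightarrow>
   (\<forall>b\<in>Basis. smooth_fun (\<lambda>x. frechet_derivative f (at x) b)) \<Longrightarrow> smooth_fun f"

definition avg :: "'a::euclidean_space set \<Rightarrow> ('a \<Rightarrow> real) \<Rightarrow> real" where
  "avg B f = (LINT x:B|lebesgue. f x) / measure lebesgue B"

definition bmo_seminorm :: "'a::euclidean_space set \<Rightarrow> ('a \<Rightarrow> real) \<Rightarrow> ennreal" where
  "bmo_seminorm U f = (SUP (z, r) \<in> {(z, r). r > 0 \<and> ball z r \<subseteq> U}.
      (\<integral>\<^sup>+ x \<in> ball z r. ennreal \<bar>f x - avg (ball z r) f\<bar> \<partial>lebesgue) / emeasure lebesgue (ball z r))"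

definition ds :: "real \<Rightarrow> ('a::euclidean_space \<Rightarrow> real) \<Rightarrow> 'a \<Rightarrow> 'a \<Rightarrow> real" where
  "ds s u x y = (u x - u y) / norm (x - y) powr s"

(* R^{sp} \<integral>_{R^n \ B_R(x0)} |v(y)|^q / |y-x0|^{n+sp} dy, i.e. Tail_q(v;B_R(x0))^q *)
definition tail_integral :: "real \<Rightarrow> real \<Rightarrow> real \<Rightarrow> ('a::euclidean_space \<Rightarrow> real) \<Rightarrow> 'a \<Rightarrow> real \<Rightarrow> ennreal" where
  "tail_integral s p q v x0 R = ennreal (R powr (s * p)) *
     (\<integral>\<^sup>+ y \<in> - ball x0 R. ennreal (\<bar>v y\<bar> powr q / norm (y - x0) powr (real DIM('a) + s * p)) \<partial>lebesgue)"

definition epow :: "ennreal \<Rightarrow> real \<Rightarrow> ennreal" where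
  "epow x a = (if x = top then top else ennreal (enn2real x powr a))"

(* Tail_q(v;B_R(x0))^p = (Tail_q^q)^{p/q} *)
definition tail_p :: "real \<Rightarrow> real \<Rightarrow> real \<Rightarrow> ('a::euclidean_space \<Rightarrow> real) \<Rightarrow> 'a \<Rightarrow> real \<Rightarrow> ennreal" where
  "tail_p s p q v x0 R = epow (tail_integral s p q v x0 R) (p / q)"

definition energy :: "real \<Rightarrow> real \<Rightarrow> real \<Rightarrow> ('a::euclidean_space \<Rightarrow> real) \<Rightarrow> 'a \<Rightarrow> real \<Rightarrow> ennreal" where
  "energy s p q u x0 R =
     ennreal (R powr (s * p) / measure lebesgue (ball (0::'a) R)) *
       (\<integral>\<^sup>+ x \<in> ball x0 R. \<integral>\<^sup>+ y \<in> ball x0 R.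
          ennreal (\<bar>ds s u x y\<bar> powr p / norm (x - y) powr real DIM('a)) \<partial>lebesgue \<partial>lebesgue)
     + tail_p s p q (\<lambda>y. u y - avg (ball x0 R) u) x0 R"

definition morrey_seminorm :: "real \<Rightarrow> real \<Rightarrow> real \<Rightarrow> real \<Rightarrow> ('a::euclidean_space \<Rightarrow> real) \<Rightarrow> 'a \<Rightarrow> real \<Rightarrow> ennreal" where
  "morrey_seminorm s p q lam u x0 R = (SUP (z, \<rho>) \<in> {(z, \<rho>). \<rho> > 0 \<and> ball z \<rho> \<subseteq> ball x0 R}.
      epow (ennreal (\<rho> powr (- lam)) * energy s p q u z \<rho>) (1 / p))"

end

theory Submission
  imports Defs
begin

lemma vol_ball: "r \<ge> 0 \<Longrightarrow> measure lebesgue (ball (c::'a::euclidean_space) r) = unit_ball_vol (DIM('a)) * r ^ DIM('a)"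
  using content_ball[of r c] by (simp add: measure_completion)
lemma emeas_ball: "emeasure lebesgue (ball (c::'a::euclidean_space) r) = ennreal (measure lebesgue (ball c r))"
  by (simp add: emeasure_eq_measure2)

lemma set_integrable_const_fin:
  assumes "A \<in> sets M" "emeasure M A < \<infinity>"
  shows "set_integrable M A (\<lambda>_. c::real)"
  unfolding set_integrable_def using integrable_real_indicator[OF assms]
  by (simp add: integrable_mult_left)

lemma set_integral_abs_le:
  fixes h :: "_ \<Rightarrow> real"
  shows "\<bar>LINT x:A|M. h x\<bar> \<le> (LINT x:A|M. \<bar>h x\<bar>)"
  unfolding set_lebesgue_integral_def
  using integral_abs_bound[of M "\<lambda>x. indicator A x *\<^sub>R h x"]
  by (simp add: abs_mult)

lemma osc_const:
  fixes f :: "'a \<Rightarrow> real"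
  assumes int: "set_integrable M B f" and B: "B \<in> sets M" "emeasure M B < \<infinity>"
    and pos: "measure M B > 0"
  shows "(LINT x:B|M. \<bar>f x - (LINT y:B|M. f y) / measure M B\<bar>) \<le> 2 * (LINT x:B|M. \<bar>f x - b\<bar>)"
proof -
  define A where "A = (LINT y:B|M. f y) / measure M B"
  define \<mu> where "\<mu> = measure M B"
  have ic: "\<And>c. set_integrable M B (\<lambda>_. c::real)" using set_integrable_const_fin[OF B] .
  have i1: "set_integrable M B (\<lambda>x. \<bar>f x - b\<bar>)"
    by (intro set_integrable_abs set_integral_diff int ic)
  have i2: "set_integrable M B (\<lambda>x. \<bar>f x - A\<bar>)"
    by (intro set_integrable_abs set_integral_diff int ic)
  have "(LINT x:B|M. \<bar>f x - A\<bar>) \<le> (LINT x:B|M. \<bar>f x - b\<bar> + \<bar>b - A\<bar>)"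
    by (rule set_integral_mono[OF i2 set_integral_add(1)[OF i1 ic]]) auto
  also have "\<dots> = (LINT x:B|M. \<bar>f x - b\<bar>) + \<mu> * \<bar>b - A\<bar>"
    using set_integral_add(2)[OF i1 ic[of "\<bar>b - A\<bar>"]] set_integral_const[OF B(1), of "\<bar>b - A\<bar>"] B(2) by (simp add: \<mu>_def)
  also have "\<mu> * \<bar>b - A\<bar> = \<bar>LINT x:B|M. b - f x\<bar>"
  proof -
    have "(LINT x:B|M. b - f x) = \<mu> * b - (LINT y:B|M. f y)"
      using set_integral_diff(2)[OF ic[of b] int] set_integral_const[OF B(1), of b] B(2) by (simp add: \<mu>_def)
    also have "(LINT y:B|M. f y) = \<mu> * A" using pos by (simp add: A_def \<mu>_def)
    finally show ?thesis using pos by (simp add: \<mu>_def abs_mult right_diff_distrib[symmetric])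
  qed
  also have "\<bar>LINT x:B|M. b - f x\<bar> \<le> (LINT x:B|M. \<bar>f x - b\<bar>)"
    using set_integral_abs_le[of M B "\<lambda>x. b - f x"] by (simp add: abs_minus_commute)
  finally show ?thesis by (simp add: A_def)
qed

lemma set_integral_subset_mono:
  fixes h :: "_ \<Rightarrow> real"
  assumes int: "set_integrable M A h" and B: "B \<in> sets M" "B \<subseteq> A" and nn: "\<And>x. x \<in> A \<Longrightarrow> 0 \<le> h x"
  shows "(LINT x:B|M. h x) \<le> (LINT x:A|M. h x)"
proof -
  have iB: "set_integrable M B h" by (rule set_integrable_subset[OF int B])
  show ?thesis
    using iB int unfolding set_lebesgue_integral_def set_integrable_def
    by (intro integral_mono) (use B(2) nn in \<open>auto split: split_indicator\<close>)
qed

lemma avg_diff: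
  fixes u :: "'a::euclidean_space \<Rightarrow> real"
  assumes "set_integrable lebesgue B u" "B \<in> sets lebesgue" "emeasure lebesgue B < \<infinity>" "measure lebesgue B > 0"
  shows "avg B u - c = (LINT x:B|lebesgue. u x - c) / measure lebesgue B"
  using set_integral_diff(2)[OF assms(1) set_integrable_const_fin[OF assms(2,3), of c]]
    set_integral_const[OF assms(2), of c] assms(3,4)
  by (simp add: avg_def field_simps)

lemma compare_balls:
  fixes u :: "'a::euclidean_space \<Rightarrow> real"
  assumes int: "set_integrable lebesgue (ball 0 1) u" and m: "m \<ge> 0"
    and H: "\<And>z r. r > 0 \<Longrightarrow> ball z r \<subseteq> ball 0 1 \<Longrightarrow>
       (LINT x:ball z r|lebesgue. \<bar>u x - avg (ball z r) u\<bar>) \<le> m * measure lebesgue (ball z r)"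
    and sub1: "ball z' r' \<subseteq> ball w R" and sub2: "ball w R \<subseteq> ball 0 1" and r': "r' > 0"
  shows "\<bar>avg (ball z' r') u - avg (ball w R) u\<bar> \<le> (R / r') ^ DIM('a) * m"
proof -
  define c where "c = avg (ball w R) u"
  have R: "R > 0" using sub1 r' by (metis centre_in_ball empty_iff ball_eq_empty not_less subset_empty)
  have iw: "set_integrable lebesgue (ball w R) u" by (rule set_integrable_subset[OF int _ sub2]) auto
  have uv: "unit_ball_vol (real DIM('a)) \<noteq> 0" using unit_ball_vol_pos[of "real DIM('a)"] by linarith
  have iz: "set_integrable lebesgue (ball z' r') u" by (rule set_integrable_subset[OF iw _ sub1]) auto
  have fin: "\<And>z r. emeasure lebesgue (ball (z::'a) r) < \<infinity>" by (simp add: emeas_ball)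
  have mz: "measure lebesgue (ball z' r') > 0" using vol_ball[of r' z'] r' by simp
  have mw: "measure lebesgue (ball w R) > 0" using vol_ball[of R w] R by simp
  have icw: "set_integrable lebesgue (ball w R) (\<lambda>x. \<bar>u x - c\<bar>)"
    by (intro set_integrable_abs set_integral_diff iw set_integrable_const_fin) (use fin in auto)
  have "\<bar>avg (ball z' r') u - c\<bar> = \<bar>LINT x:ball z' r'|lebesgue. u x - c\<bar> / measure lebesgue (ball z' r')"
    using avg_diff[OF iz _ fin mz, of c] mz by simp
  also have "\<dots> \<le> (LINT x:ball z' r'|lebesgue. \<bar>u x - c\<bar>) / measure lebesgue (ball z' r')"
    using mz set_integral_abs_le by (intro divide_right_mono) auto
  also have "\<dots> \<le> (LINT x:ball w R|lebesgue. \<bar>u x - c\<bar>) / measure lebesgue (ball z' r')"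
    using mz by (intro divide_right_mono set_integral_subset_mono[OF icw _ sub1]) auto
  also have "\<dots> \<le> m * measure lebesgue (ball w R) / measure lebesgue (ball z' r')"
    using mz H[OF R sub2] by (intro divide_right_mono) (auto simp: c_def)
  also have "\<dots> = (R / r') ^ DIM('a) * m"
    using vol_ball[of r' z'] vol_ball[of R w] r' R uv by (simp add: power_divide field_simps)
  finally show ?thesis by (simp add: c_def)
qed

lemma chain_bound:
  fixes u :: "'a::euclidean_space \<Rightarrow> real"
  assumes int: "set_integrable lebesgue (ball 0 1) u" and m: "m \<ge> 0"
    and H: "\<And>z r. r > 0 \<Longrightarrow> ball z r \<subseteq> ball 0 1 \<Longrightarrow>
       (LINT x:ball z r|lebesgue. \<bar>u x - avg (ball z r) u\<bar>) \<le> m * measure lebesgue (ball z r)"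
    and z: "ball z (1/8) \<subseteq> ball 0 1" and r: "0 < r" "r \<le> 1/8"
  shows "r * \<bar>avg (ball z r) u - avg (ball 0 1) u\<bar> \<le> 16 ^ DIM('a) * m"
proof -
  let ?a = "avg (ball 0 1) u"
  have base: "r * \<bar>avg (ball z r) u - ?a\<bar> \<le> 16 ^ DIM('a) * m"
    if "0 < r" "r \<le> 1/8" "1/16 \<le> r" for r
  proof -
    have sub: "ball z r \<subseteq> ball 0 1" using z that by (meson order_trans subset_ball)
    have "\<bar>avg (ball z r) u - ?a\<bar> \<le> (1 / r) ^ DIM('a) * m"
      by (rule compare_balls[OF int m H sub order_refl]) (use that in auto)
    also have "\<dots> \<le> 16 ^ DIM('a) * m"
      using that m by (intro mult_right_mono power_mono) (auto simp: field_simps)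
    finally have "\<bar>avg (ball z r) u - ?a\<bar> \<le> 16 ^ DIM('a) * m" .
    moreover have "r * \<bar>avg (ball z r) u - ?a\<bar> \<le> \<bar>avg (ball z r) u - ?a\<bar>"
      using that by (intro mult_left_le_one_le) auto
    ultimately show ?thesis by linarith
  qed
  have P: "\<And>r. 0 < r \<Longrightarrow> r \<le> 1/8 \<Longrightarrow> 1/16 \<le> 2 ^ k * r \<Longrightarrow>
      r * \<bar>avg (ball z r) u - ?a\<bar> \<le> 16 ^ DIM('a) * m" for k :: nat
  proof (induction k)
    case 0
    then show ?case using base by simp
  next
    case (Suc k)
    show ?case
    proof (cases "1/16 \<le> r")
      case True
      then show ?thesis using base Suc.prems by simp
    next
      case False
      have r2: "2 * r \<le> 1/8" using False by simp
      have IH: "(2 * r) * \<bar>avg (ball z (2 * r)) u - ?a\<bar> \<le> 16 ^ DIM('a) * m"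
        using Suc.prems r2 by (intro Suc.IH) (auto simp: mult_ac)
      have sub2: "ball z (2 * r) \<subseteq> ball 0 1" using z r2 by (meson order_trans subset_ball)
      have sub1: "ball z r \<subseteq> ball z (2 * r)" using Suc.prems by (intro subset_ball) auto
      have cmp: "\<bar>avg (ball z r) u - avg (ball z (2 * r)) u\<bar> \<le> (2 * r / r) ^ DIM('a) * m"
        by (rule compare_balls[OF int m H sub1 sub2]) (use Suc.prems in auto)
      then have cmp': "\<bar>avg (ball z r) u - avg (ball z (2 * r)) u\<bar> \<le> 2 ^ DIM('a) * m"
        using Suc.prems by simp
      have p: "(2::real) ^ DIM('a) \<le> 16 ^ DIM('a)" by (intro power_mono) auto
      have "r * \<bar>avg (ball z r) u - ?a\<bar> \<le> r * \<bar>avg (ball z r) u - avg (ball z (2 * r)) u\<bar>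
          + r * \<bar>avg (ball z (2 * r)) u - ?a\<bar>"
        using Suc.prems by (simp add: distrib_left[symmetric] mult_left_mono)
      also have "\<dots> \<le> (1/16) * (2 ^ DIM('a) * m) + (1/2) * (16 ^ DIM('a) * m)"
      proof (intro add_mono)
        show "r * \<bar>avg (ball z r) u - avg (ball z (2 * r)) u\<bar> \<le> (1/16) * (2 ^ DIM('a) * m)"
          using False cmp' Suc.prems by (intro mult_mono) auto
        show "r * \<bar>avg (ball z (2 * r)) u - ?a\<bar> \<le> (1/2) * (16 ^ DIM('a) * m)"
          using IH by simp
      qed
      also have "\<dots> \<le> 16 ^ DIM('a) * m" using mult_right_mono[OF p m] mult_nonneg_nonneg[OF zero_le_power[of "16::real" "DIM('a)"] m] by linarith
      finally show ?thesis .
    qed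
  qed
  obtain k :: nat where k: "1 / (16 * r) < 2 ^ k" using real_arch_pow[of 2 "1/(16*r)"] by auto
  have "1/16 \<le> 2 ^ k * r" using k r by (simp add: field_simps)
  then show ?thesis using P r by blast
qed

lemma smooth_unfold:
  "smooth_fun (\<psi>::'a::euclidean_space \<Rightarrow> real) \<Longrightarrow> \<psi> differentiable_on UNIV \<and> (\<forall>b\<in>Basis. smooth_fun (\<lambda>x. frechet_derivative \<psi> (at x) b))"
  by (erule smooth_fun.cases) simp

lemma smooth_bounded:
  fixes \<psi> :: "'a::euclidean_space \<Rightarrow> real"
  assumes sm: "smooth_fun \<psi>" and supp: "closure {x. \<psi> x \<noteq> 0} \<subseteq> ball 0 (3/4)"
  obtains K where "K \<ge> 0" "\<And>x. \<bar>\<psi> x\<bar> \<le> K"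
proof -
  from sm have dif: "\<psi> differentiable_on UNIV" using smooth_unfold[OF sm] by simp
  have "continuous_on (cball 0 1) \<psi>"
    by (rule continuous_on_subset[OF differentiable_imp_continuous_on[OF dif]]) simp
  then obtain K where K: "K \<ge> 0" "\<And>x. x \<in> cball 0 1 \<Longrightarrow> norm (\<psi> x) \<le> K"
    by (rule continuous_on_compact_bound[OF compact_cball]) (rule that)
  have "\<bar>\<psi> x\<bar> \<le> K" for x
  proof (cases "\<psi> x = 0")
    case False
    have "x \<in> ball 0 (3/4)"
      by (rule subsetD[OF supp subsetD[OF closure_subset]]) (simp add: False)
    then have "x \<in> cball 0 1" by simp
    then show ?thesis using K(2)[of x] by simp
  qed (use K in auto)
  then show ?thesis using K that by blast
qed
lemma smooth_lipschitz:
  fixes \<psi> :: "'a::euclidean_space \<Rightarrow> real"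
  assumes sm: "smooth_fun \<psi>"
  obtains L where "L \<ge> 0" "\<And>x y. x \<in> cball 0 1 \<Longrightarrow> y \<in> cball 0 1 \<Longrightarrow> \<bar>\<psi> x - \<psi> y\<bar> \<le> L * norm (x - y)"
proof -
  define F where "F x = frechet_derivative \<psi> (at x)" for x
  from sm have dif: "\<psi> differentiable_on UNIV" and parts: "\<forall>b\<in>Basis. smooth_fun (\<lambda>x. F x b)"
    using smooth_unfold[OF sm] unfolding F_def by auto
  have der: "(\<psi> has_derivative F x) (at x)" for x
    using dif by (simp add: F_def differentiable_on_def frechet_derivative_works[symmetric])
  have "\<forall>b\<in>Basis. \<exists>M. M \<ge> 0 \<and> (\<forall>x\<in>cball (0::'a) 1. norm (F x b) \<le> M)"
  proof
    fix b :: 'a assume b: "b \<in> Basis"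
    have sb: "smooth_fun (\<lambda>x. F x b)" using parts b by blast
    have "(\<lambda>x. F x b) differentiable_on UNIV" using smooth_unfold[OF sb] by simp
    then have "continuous_on (cball 0 1) (\<lambda>x. F x b)"
      by (rule continuous_on_subset[OF differentiable_imp_continuous_on]) simp
    then obtain M where "M \<ge> 0" "\<And>x. x \<in> cball 0 1 \<Longrightarrow> norm (F x b) \<le> M"
      by (rule continuous_on_compact_bound[OF compact_cball]) (rule that)
    then show "\<exists>M. M \<ge> 0 \<and> (\<forall>x\<in>cball (0::'a) 1. norm (F x b) \<le> M)" by blast
  qed
  then obtain Mf where Mf: "\<forall>b\<in>Basis. Mf b \<ge> 0 \<and> (\<forall>x\<in>cball (0::'a) 1. norm (F x b) \<le> Mf b)"
    by (rule bchoice[THEN exE]) (rule that)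
  define L where "L = (\<Sum>b\<in>Basis. Mf b)"
  have L0: "L \<ge> 0" unfolding L_def using Mf by (intro sum_nonneg) blast
  have on: "onorm (F x) \<le> L" if x: "x \<in> cball 0 1" for x
  proof (rule onorm_le)
    fix h :: 'a
    have lin: "linear (F x)" using der has_derivative_linear by blast
    have "F x h = F x (\<Sum>b\<in>Basis. (h \<bullet> b) *\<^sub>R b)" by (simp add: euclidean_representation)
    also have "\<dots> = (\<Sum>b\<in>Basis. (h \<bullet> b) * F x b)"
      using lin by (simp add: linear_sum linear_scale)
    finally have "norm (F x h) \<le> (\<Sum>b\<in>Basis. norm ((h \<bullet> b) * F x b))"
      by (simp add: sum_abs)
    also have "\<dots> \<le> (\<Sum>b\<in>Basis. Mf b * norm h)"
    proof (intro sum_mono)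
      fix b :: 'a assume b: "b \<in> Basis"
      have "norm ((h \<bullet> b) * F x b) = \<bar>h \<bullet> b\<bar> * norm (F x b)" by (simp add: abs_mult)
      also have "\<dots> \<le> norm h * Mf b"
        using Mf b x by (intro mult_mono) (auto simp: Basis_le_norm)
      finally show "norm ((h \<bullet> b) * F x b) \<le> Mf b * norm h" by (simp add: mult.commute)
    qed
    also have "\<dots> = L * norm h" by (simp add: L_def sum_distrib_right)
    finally show "norm (F x h) \<le> L * norm h" .
  qed
  have "\<bar>\<psi> x - \<psi> y\<bar> \<le> L * norm (x - y)" if "x \<in> cball 0 1" "y \<in> cball 0 1" for x y
    using differentiable_bound[of "cball 0 1" \<psi> F L x y] der on that
    by (auto intro: has_derivative_at_withinI)
  then show ?thesis using L0 that by blast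
qed

lemma f_integrable:
  fixes u \<psi> :: "'a::euclidean_space \<Rightarrow> real"
  assumes umeas: "u \<in> borel_measurable lebesgue"
    and int: "set_integrable lebesgue (ball 0 1) u" and m: "m \<ge> 0"
    and H: "\<And>z r. r > 0 \<Longrightarrow> ball z r \<subseteq> ball 0 1 \<Longrightarrow>
       (LINT x:ball z r|lebesgue. \<bar>u x - avg (ball z r) u\<bar>) \<le> m * measure lebesgue (ball z r)"
    and psimeas: "\<psi> \<in> borel_measurable lebesgue"
    and K: "K \<ge> 0" "\<And>x. \<bar>\<psi> x\<bar> \<le> K"
    and L: "L \<ge> 0" "\<And>x y. x \<in> cball 0 1 \<Longrightarrow> y \<in> cball 0 1 \<Longrightarrow> \<bar>\<psi> x - \<psi> y\<bar> \<le> L * norm (x - y)"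
    and supp: "\<And>x. \<psi> x \<noteq> 0 \<Longrightarrow> x \<in> ball 0 (3/4)"
    and r: "r > 0"
  shows "set_integrable lebesgue (ball z r) (\<lambda>x. (u x - avg (ball 0 1) u) * \<psi> x)"
proof -
  define a where "a = avg (ball 0 1) u"
  define f where "f x = (u x - a) * \<psi> x" for x
  define \<mu> where "\<mu> = measure lebesgue (ball z r)"
  define V1 where "V1 = measure lebesgue (ball (0::'a) 1)"
  have fin: "\<And>z r. emeasure lebesgue (ball (z::'a) r) < \<infinity>" by (simp add: emeas_ball)
  have mu: "\<mu> > 0" using vol_ball[of r z] r by (simp add: \<mu>_def)
  have ig: "set_integrable lebesgue (ball 0 1) (\<lambda>x. u x - a)"
    by (intro set_integral_diff int set_integrable_const_fin) (use fin in auto)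
  have fB1: "set_integrable lebesgue (ball 0 1) f"
  proof (rule set_integrable_bound[of _ _ "\<lambda>x. K * (u x - a)"])
    show "set_integrable lebesgue (ball 0 1) (\<lambda>x. K * (u x - a))" using ig by simp
    show "set_borel_measurable lebesgue (ball 0 1) f"
      unfolding set_borel_measurable_def f_def
      by (intro borel_measurable_scaleR borel_measurable_indicator borel_measurable_times borel_measurable_diff umeas psimeas borel_measurable_const) simp
    show "AE x in lebesgue. x \<in> ball 0 1 \<longrightarrow> norm (f x) \<le> norm (K * (u x - a))"
    proof (intro AE_I2 impI)
      fix x show "norm (f x) \<le> norm (K * (u x - a))"
        using mult_right_mono[OF K(2)[of x] abs_ge_zero[of "u x - a"]] K(1)
        by (simp add: f_def abs_mult mult.commute)
    qed
  qed
  have fzero: "f x = 0" if "x \<notin> ball 0 (3/4)" for x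
    using supp that by (auto simp: f_def)
  have fI: "integrable lebesgue f"
  proof -
    have "(\<lambda>x. indicator (ball 0 1) x *\<^sub>R f x) = f"
    proof
      fix x show "indicator (ball 0 1) x *\<^sub>R f x = f x"
        using fzero[of x] by (cases "x \<in> ball 0 1") auto
    qed
    then show ?thesis using fB1 unfolding set_integrable_def by simp
  qed
  have fint: "set_integrable lebesgue (ball z r) f"
    unfolding set_integrable_def by (rule integrable_mult_indicator[OF _ fI]) simp
  moreover have fe: "f = (\<lambda>x. (u x - a) * \<psi> x)" by (simp add: fun_eq_iff f_def)
  ultimately show ?thesis by (simp add: a_def)
qed

lemma core:
  fixes u \<psi> :: "'a::euclidean_space \<Rightarrow> real"
  assumes umeas: "u \<in> borel_measurable lebesgue"
    and int: "set_integrable lebesgue (ball 0 1) u" and m: "m \<ge> 0"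
    and H: "\<And>z r. r > 0 \<Longrightarrow> ball z r \<subseteq> ball 0 1 \<Longrightarrow>
       (LINT x:ball z r|lebesgue. \<bar>u x - avg (ball z r) u\<bar>) \<le> m * measure lebesgue (ball z r)"
    and psimeas: "\<psi> \<in> borel_measurable lebesgue"
    and K: "K \<ge> 0" "\<And>x. \<bar>\<psi> x\<bar> \<le> K"
    and L: "L \<ge> 0" "\<And>x y. x \<in> cball 0 1 \<Longrightarrow> y \<in> cball 0 1 \<Longrightarrow> \<bar>\<psi> x - \<psi> y\<bar> \<le> L * norm (x - y)"
    and supp: "\<And>x. \<psi> x \<noteq> 0 \<Longrightarrow> x \<in> ball 0 (3/4)"
    and r: "r > 0"
  shows "(LINT x:ball z r|lebesgue. \<bar>(u x - avg (ball 0 1) u) * \<psi> x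
            - avg (ball z r) (\<lambda>x. (u x - avg (ball 0 1) u) * \<psi> x)\<bar>)
         \<le> 2 * (K * 8 ^ DIM('a) + K + L * 16 ^ DIM('a)) * m * measure lebesgue (ball z r)"
proof -
  define a where "a = avg (ball 0 1) u"
  define f where "f x = (u x - a) * \<psi> x" for x
  define \<mu> where "\<mu> = measure lebesgue (ball z r)"
  define V1 where "V1 = measure lebesgue (ball (0::'a) 1)"
  have fin: "\<And>z r. emeasure lebesgue (ball (z::'a) r) < \<infinity>" by (simp add: emeas_ball)
  have mu: "\<mu> > 0" using vol_ball[of r z] r by (simp add: \<mu>_def)
  have ig: "set_integrable lebesgue (ball 0 1) (\<lambda>x. u x - a)"
    by (intro set_integral_diff int set_integrable_const_fin) (use fin in auto)
  have fB1: "set_integrable lebesgue (ball 0 1) f"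
  proof (rule set_integrable_bound[of _ _ "\<lambda>x. K * (u x - a)"])
    show "set_integrable lebesgue (ball 0 1) (\<lambda>x. K * (u x - a))" using ig by simp
    show "set_borel_measurable lebesgue (ball 0 1) f"
      unfolding set_borel_measurable_def f_def
      by (intro borel_measurable_scaleR borel_measurable_indicator borel_measurable_times borel_measurable_diff umeas psimeas borel_measurable_const) simp
    show "AE x in lebesgue. x \<in> ball 0 1 \<longrightarrow> norm (f x) \<le> norm (K * (u x - a))"
    proof (intro AE_I2 impI)
      fix x show "norm (f x) \<le> norm (K * (u x - a))"
        using mult_right_mono[OF K(2)[of x] abs_ge_zero[of "u x - a"]] K(1)
        by (simp add: f_def abs_mult mult.commute)
    qed
  qed
  have fzero: "f x = 0" if "x \<notin> ball 0 (3/4)" for x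
    using supp that by (auto simp: f_def)
  have fI: "integrable lebesgue f"
  proof -
    have "(\<lambda>x. indicator (ball 0 1) x *\<^sub>R f x) = f"
    proof
      fix x show "indicator (ball 0 1) x *\<^sub>R f x = f x"
        using fzero[of x] by (cases "x \<in> ball 0 1") auto
    qed
    then show ?thesis using fB1 unfolding set_integrable_def by simp
  qed
  have fint: "set_integrable lebesgue (ball z r) f"
    unfolding set_integrable_def by (rule integrable_mult_indicator[OF _ fI]) simp
  have osc: "(LINT x:ball z r|lebesgue. \<bar>f x - avg (ball z r) f\<bar>) \<le> 2 * (LINT x:ball z r|lebesgue. \<bar>f x - b\<bar>)" for b
    using osc_const[OF fint _ fin mu[unfolded \<mu>_def], of b] by (simp add: avg_def)
  have C0: "0 \<le> K * 8 ^ DIM('a) + K + L * 16 ^ DIM('a)" using K L by simp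
  have "(LINT x:ball z r|lebesgue. \<bar>f x - avg (ball z r) f\<bar>)
         \<le> 2 * (K * 8 ^ DIM('a) + K + L * 16 ^ DIM('a)) * m * \<mu>"
  proof (cases "r \<ge> 1/8")
    case True
    have "(LINT x:ball z r|lebesgue. \<bar>f x - 0\<bar>) \<le> integral\<^sup>L lebesgue (\<lambda>x. \<bar>f x\<bar>)"
      unfolding set_lebesgue_integral_def
      using fI integrable_mult_indicator[OF _ integrable_abs[OF fI], of "ball z r"]
      by (intro integral_mono) (auto split: split_indicator)
    also have "integral\<^sup>L lebesgue (\<lambda>x. \<bar>f x\<bar>) = (LINT x:ball 0 1|lebesgue. \<bar>f x\<bar>)"
      unfolding set_lebesgue_integral_def
      by (intro Bochner_Integration.integral_cong refl) (use fzero in \<open>auto split: split_indicator\<close>)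
    also have "\<dots> \<le> (LINT x:ball 0 1|lebesgue. K * \<bar>u x - a\<bar>)"
    proof (rule set_integral_mono)
      show "set_integrable lebesgue (ball 0 1) (\<lambda>x. \<bar>f x\<bar>)" using set_integrable_abs[OF fB1] .
      show "set_integrable lebesgue (ball 0 1) (\<lambda>x. K * \<bar>u x - a\<bar>)" using set_integrable_abs[OF ig] by simp
      fix x show "\<bar>f x\<bar> \<le> K * \<bar>u x - a\<bar>"
        using mult_right_mono[OF K(2)[of x] abs_ge_zero[of "u x - a"]]
        by (simp add: f_def abs_mult mult.commute)
    qed
    also have "\<dots> = K * (LINT x:ball 0 1|lebesgue. \<bar>u x - a\<bar>)" by simp
    also have "\<dots> \<le> K * (m * V1)"
      using H[of 1 0] K unfolding a_def V1_def by (intro mult_left_mono) auto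
    also have "\<dots> \<le> K * 8 ^ DIM('a) * m * \<mu>"
    proof -
      have "V1 = unit_ball_vol (real DIM('a))" using vol_ball[of 1 "0::'a"] by (simp add: V1_def)
      moreover have "\<mu> = unit_ball_vol (real DIM('a)) * r ^ DIM('a)" using vol_ball[of r z] r by (simp add: \<mu>_def)
      moreover have "1 \<le> 8 ^ DIM('a) * r ^ DIM('a)"
      proof -
        have "1 \<le> (8 * r) ^ DIM('a)" using True by (intro one_le_power) auto
        then show ?thesis by (simp add: power_mult_distrib)
      qed
      moreover have "unit_ball_vol (real DIM('a)) \<ge> 0" by simp
      ultimately have "V1 \<le> 8 ^ DIM('a) * \<mu>"
        by (metis mult.commute mult.left_commute mult_left_mono mult.right_neutral)
      then show ?thesis using K m
        by (metis mult.assoc mult.commute mult_left_mono mult_nonneg_nonneg)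
    qed
    finally have "(LINT x:ball z r|lebesgue. \<bar>f x - 0\<bar>) \<le> K * 8 ^ DIM('a) * m * \<mu>" .
    moreover have "K * 8 ^ DIM('a) * m * \<mu> \<le> (K * 8 ^ DIM('a) + K + L * 16 ^ DIM('a)) * m * \<mu>"
      using K L m mu by (intro mult_right_mono) (auto intro!: mult_nonneg_nonneg)
    ultimately show ?thesis using osc[of 0] by linarith
  next
    case False
    show ?thesis
    proof (cases "norm z \<ge> 7/8")
      case True
      have "(LINT x:ball z r|lebesgue. \<bar>f x - 0\<bar>) = (LINT x:ball z r|lebesgue. 0)"
      proof (rule set_lebesgue_integral_cong)
        show "\<forall>x. x \<in> ball z r \<longrightarrow> \<bar>f x - 0\<bar> = 0"
        proof (intro allI impI)
          fix x assume "x \<in> ball z r"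
          then have "norm (z - x) < r" by (simp add: dist_norm)
          moreover have "norm z \<le> norm x + norm (z - x)" using norm_triangle_ineq[of x "z - x"] by simp
          ultimately have "x \<notin> ball 0 (3/4)" using True False by auto
          then show "\<bar>f x - 0\<bar> = 0" using fzero by simp
        qed
      qed simp
      moreover have "0 \<le> 2 * (K * 8 ^ DIM('a) + K + L * 16 ^ DIM('a)) * m * \<mu>"
        using C0 m mu by simp
      ultimately show ?thesis using osc[of 0] by simp
    next
      case False2: False
      define ub where "ub = avg (ball z r) u"
      have sub8: "ball z (1/8) \<subseteq> ball 0 1"
      proof
        fix x assume "x \<in> ball z (1/8)"
        then have "norm (x - z) < 1/8" by (simp add: dist_norm norm_minus_commute)
        moreover have "norm x \<le> norm z + norm (x - z)" using norm_triangle_ineq[of z "x - z"] by simp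
        ultimately show "x \<in> ball 0 1" using False2 by simp
      qed
      have subr: "ball z r \<subseteq> ball 0 1" using sub8 False by (meson order_trans subset_ball not_le less_imp_le)
      have iu: "set_integrable lebesgue (ball z r) u" by (rule set_integrable_subset[OF int _ subr]) auto
      have chain: "r * \<bar>ub - a\<bar> \<le> 16 ^ DIM('a) * m"
        unfolding ub_def a_def by (rule chain_bound[OF int m H sub8 r]) (use False in auto)
      have ptw: "\<bar>f x - \<psi> z * (ub - a)\<bar> \<le> K * \<bar>u x - ub\<bar> + L * (r * \<bar>ub - a\<bar>)" if x: "x \<in> ball z r" for x
      proof -
        have zb: "z \<in> ball 0 1" using subr r by (meson centre_in_ball subsetD)
        have xb: "x \<in> ball 0 1" using subr x by (meson subsetD)
        have xz: "x \<in> cball 0 1" "z \<in> cball 0 1" using xb zb ball_subset_cball by auto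
        have nxz: "norm (x - z) \<le> r" using x by (simp add: dist_norm norm_minus_commute)
        have "f x - \<psi> z * (ub - a) = (u x - ub) * \<psi> x + (ub - a) * (\<psi> x - \<psi> z)"
          by (simp add: f_def algebra_simps)
        then have "\<bar>f x - \<psi> z * (ub - a)\<bar> \<le> \<bar>u x - ub\<bar> * \<bar>\<psi> x\<bar> + \<bar>ub - a\<bar> * \<bar>\<psi> x - \<psi> z\<bar>"
          by (simp add: abs_mult[symmetric] abs_triangle_ineq)
        also have "\<dots> \<le> \<bar>u x - ub\<bar> * K + \<bar>ub - a\<bar> * (L * r)"
        proof (intro add_mono mult_left_mono)
          show "\<bar>\<psi> x - \<psi> z\<bar> \<le> L * r"
            using L(2)[OF xz] mult_left_mono[OF nxz L(1)] by linarith
        qed (use K in auto)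
        finally show ?thesis by (simp add: algebra_simps)
      qed
      have "(LINT x:ball z r|lebesgue. \<bar>f x - \<psi> z * (ub - a)\<bar>)
          \<le> (LINT x:ball z r|lebesgue. K * \<bar>u x - ub\<bar> + L * (r * \<bar>ub - a\<bar>))"
      proof (rule set_integral_mono[OF _ _ ptw])
        show "set_integrable lebesgue (ball z r) (\<lambda>x. \<bar>f x - \<psi> z * (ub - a)\<bar>)"
          by (intro set_integrable_abs set_integral_diff fint set_integrable_const_fin) (use fin in auto)
        show "set_integrable lebesgue (ball z r) (\<lambda>x. K * \<bar>u x - ub\<bar> + L * (r * \<bar>ub - a\<bar>))"
          by (intro set_integral_add set_integrable_mult_right set_integrable_abs set_integral_diff iu set_integrable_const_fin) (use fin in auto)
      qed
      also have "\<dots> = K * (LINT x:ball z r|lebesgue. \<bar>u x - ub\<bar>) + L * (r * \<bar>ub - a\<bar>) * \<mu>"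
      proof -
        have i1: "set_integrable lebesgue (ball z r) (\<lambda>x. K * \<bar>u x - ub\<bar>)"
          by (intro set_integrable_mult_right set_integrable_abs set_integral_diff iu set_integrable_const_fin) (use fin in auto)
        have ic: "set_integrable lebesgue (ball z r) (\<lambda>_. L * (r * \<bar>ub - a\<bar>))"
          by (rule set_integrable_const_fin) (use fin in auto)
        show ?thesis
          using set_integral_add(2)[OF i1 ic]
            set_integral_const[of "ball z r" lebesgue "L * (r * \<bar>ub - a\<bar>)"] fin[of z r]
          by (simp add: \<mu>_def less_top mult.commute)
      qed
      also have "\<dots> \<le> K * (m * \<mu>) + L * (16 ^ DIM('a) * m) * \<mu>"
        using H[OF r subr] K L chain mu
        by (intro add_mono mult_left_mono mult_right_mono) (auto simp: ub_def \<mu>_def)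
      finally have "(LINT x:ball z r|lebesgue. \<bar>f x - \<psi> z * (ub - a)\<bar>) \<le> (K + L * 16 ^ DIM('a)) * m * \<mu>"
        by (simp add: algebra_simps)
      moreover have "(K + L * 16 ^ DIM('a)) * m * \<mu> \<le> (K * 8 ^ DIM('a) + K + L * 16 ^ DIM('a)) * m * \<mu>"
        using K L m mu by (intro mult_right_mono) (auto intro!: mult_nonneg_nonneg)
      ultimately show ?thesis using osc[of "\<psi> z * (ub - a)"] by linarith
    qed
  qed
  moreover have fe: "f = (\<lambda>x. (u x - a) * \<psi> x)" by (simp add: fun_eq_iff f_def)
  ultimately show ?thesis by (simp add: fe a_def \<mu>_def)
qed


lemma nn_set_abs:
  fixes h :: "'a::euclidean_space \<Rightarrow> real"
  assumes "set_integrable lebesgue B h"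
  shows "(\<integral>\<^sup>+ x \<in> B. ennreal \<bar>h x\<bar> \<partial>lebesgue) = ennreal (LINT x:B|lebesgue. \<bar>h x\<bar>)"
proof -
  have i: "integrable lebesgue (\<lambda>x. \<bar>h x\<bar> * indicator B x)"
    using set_integrable_abs[OF assms] unfolding set_integrable_def by (simp add: mult.commute)
  have "(\<integral>\<^sup>+ x \<in> B. ennreal \<bar>h x\<bar> \<partial>lebesgue) = (\<integral>\<^sup>+ x. ennreal (\<bar>h x\<bar> * indicator B x) \<partial>lebesgue)"
    by (rule nn_integral_set_ennreal)
  also have "\<dots> = ennreal (integral\<^sup>L lebesgue (\<lambda>x. \<bar>h x\<bar> * indicator B x))"
    by (rule nn_integral_eq_integral[OF i]) auto
  also have "\<dots> = ennreal (LINT x:B|lebesgue. \<bar>h x\<bar>)"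
    unfolding set_lebesgue_integral_def by (simp add: mult.commute)
  finally show ?thesis .
qed

theorem mainTheorem14:
  fixes s p :: real and \<psi> :: "'a::euclidean_space \<Rightarrow> real"
  assumes s: "0 < s" "s < 1"
    and p: "1 < p"
    and psi_smooth: "smooth_fun \<psi>"
    and psi_supp: "closure {x. \<psi> x \<noteq> 0} \<subseteq> ball 0 (3/4)"
    and psi_one: "\<And>x. x \<in> ball 0 (5/8) \<Longrightarrow> \<psi> x = 1"
  shows "\<exists>c::real. c \<ge> 0 \<and>
    (\<forall>q::real. p - 1 < q \<and> q \<le> max ((p + 1) / 2) ((2 * p - 1) / 2) \<longrightarrow>
      (\<forall>u::'a \<Rightarrow> real. u \<in> borel_measurable lebesgue \<longrightarrow>
         set_integrable lebesgue (ball 0 1) u \<longrightarrow>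
         morrey_seminorm s p q 0 u 0 1 < top \<longrightarrow>
         bmo_seminorm UNIV (\<lambda>x. (u x - avg (ball 0 1) u) * \<psi> x)
           \<le> ennreal c * (bmo_seminorm (ball 0 1) u + morrey_seminorm s p q 0 u 0 1)))"
proof -
  obtain K where K: "K \<ge> 0" "\<And>x. \<bar>\<psi> x\<bar> \<le> K"
    using smooth_bounded[OF psi_smooth psi_supp] by blast
  obtain L where L: "L \<ge> 0" "\<And>x y. x \<in> cball 0 1 \<Longrightarrow> y \<in> cball 0 1 \<Longrightarrow> \<bar>\<psi> x - \<psi> y\<bar> \<le> L * norm (x - y)"
    using smooth_lipschitz[OF psi_smooth] by blast
  have supp: "\<And>x. \<psi> x \<noteq> 0 \<Longrightarrow> x \<in> ball 0 (3/4)"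
    by (rule subsetD[OF psi_supp subsetD[OF closure_subset]]) simp
  have dif: "\<psi> differentiable_on UNIV" using smooth_unfold[OF psi_smooth] by simp
  have psimeas: "\<psi> \<in> borel_measurable lebesgue"
    using continuous_imp_measurable_on_sets_lebesgue[OF differentiable_imp_continuous_on[OF dif]]
    by (simp add: lebesgue_on_UNIV_eq)
  define C0 where "C0 = 2 * (K * 8 ^ DIM('a) + K + L * 16 ^ DIM('a))"
  define C where "C = C0 + 1"
  have C0: "C0 \<ge> 0" using K L by (simp add: C0_def)
  have fin: "\<And>z r. emeasure lebesgue (ball (z::'a) r) < \<infinity>" by (simp add: emeas_ball)
  show ?thesis
  proof (rule exI[of _ C], intro conjI allI impI)
    show "C \<ge> 0" using C0 by (simp add: C_def)
    fix q :: real and u :: "'a \<Rightarrow> real"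
    assume umeas: "u \<in> borel_measurable lebesgue" and int: "set_integrable lebesgue (ball 0 1) u"
    define M where "M = bmo_seminorm (ball 0 1) u"
    define Mor where "Mor = morrey_seminorm s p q 0 u 0 1"
    show "bmo_seminorm UNIV (\<lambda>x. (u x - avg (ball 0 1) u) * \<psi> x) \<le> ennreal C * (bmo_seminorm (ball 0 1) u + morrey_seminorm s p q 0 u 0 1)"
    proof (cases "M = top")
      case True
      have "ennreal C * (M + Mor) = top" using True C0 by (simp add: C_def ennreal_mult_top)
      then show ?thesis by (simp add: M_def Mor_def)
    next
      case False
      define m where "m = enn2real M"
      have Mm: "M = ennreal m" using False by (simp add: m_def less_top)
      have m: "m \<ge> 0" by (simp add: m_def)
      have H: "(LINT x:ball z r|lebesgue. \<bar>u x - avg (ball z r) u\<bar>) \<le> m * measure lebesgue (ball z r)"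
        if r: "r > 0" and sub: "ball z r \<subseteq> ball 0 1" for z r
      proof -
        define I where "I = (LINT x:ball z r|lebesgue. \<bar>u x - avg (ball z r) u\<bar>)"
        define \<mu> where "\<mu> = measure lebesgue (ball z r)"
        have mu: "\<mu> > 0" using vol_ball[of r z] r by (simp add: \<mu>_def)
        have iu: "set_integrable lebesgue (ball z r) (\<lambda>x. u x - avg (ball z r) u)"
          by (intro set_integral_diff set_integrable_subset[OF int _ sub] set_integrable_const_fin) (use fin in auto)
        have I0: "I \<ge> 0" unfolding I_def set_lebesgue_integral_def by (intro integral_nonneg_AE) auto
        have "(\<integral>\<^sup>+ x \<in> ball z r. ennreal \<bar>u x - avg (ball z r) u\<bar> \<partial>lebesgue) / emeasure lebesgue (ball z r) \<le> M"
          unfolding M_def bmo_seminorm_def using r sub by (intro SUP_upper2[of "(z, r)"]) auto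
        also have "(\<integral>\<^sup>+ x \<in> ball z r. ennreal \<bar>u x - avg (ball z r) u\<bar> \<partial>lebesgue) / emeasure lebesgue (ball z r)
            = ennreal (I / \<mu>)"
          using nn_set_abs[OF iu] emeas_ball[of z r] divide_ennreal[OF I0 mu] by (simp add: I_def \<mu>_def)
        finally have "I / \<mu> \<le> m" using m by (simp add: Mm ennreal_le_iff)
        then show ?thesis using mu by (simp add: I_def \<mu>_def field_simps)
      qed
      have "bmo_seminorm UNIV (\<lambda>x. (u x - avg (ball 0 1) u) * \<psi> x) \<le> ennreal (C0 * m)"
        unfolding bmo_seminorm_def
      proof (intro SUP_least, clarify)
        fix z :: 'a and r :: real assume r: "r > 0"
        define f where "f = (\<lambda>x. (u x - avg (ball 0 1) u) * \<psi> x)"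
        define I where "I = (LINT x:ball z r|lebesgue. \<bar>f x - avg (ball z r) f\<bar>)"
        define \<mu> where "\<mu> = measure lebesgue (ball z r)"
        have mu: "\<mu> > 0" using vol_ball[of r z] r by (simp add: \<mu>_def)
        have fi: "set_integrable lebesgue (ball z r) f"
          unfolding f_def by (rule f_integrable[OF umeas int m H psimeas K L supp r])
        have iu: "set_integrable lebesgue (ball z r) (\<lambda>x. f x - avg (ball z r) f)"
          by (intro set_integral_diff fi set_integrable_const_fin) (use fin in auto)
        have I0: "I \<ge> 0" unfolding I_def set_lebesgue_integral_def by (intro integral_nonneg_AE) auto
        have core': "I \<le> C0 * m * \<mu>"
          using core[OF umeas int m H psimeas K L supp r, of z] by (simp add: I_def f_def \<mu>_def C0_def)
        have "(\<integral>\<^sup>+ x \<in> ball z r. ennreal \<bar>f x - avg (ball z r) f\<bar> \<partial>lebesgue) / emeasure lebesgue (ball z r)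
            = ennreal (I / \<mu>)"
          using nn_set_abs[OF iu] emeas_ball[of z r] divide_ennreal[OF I0 mu] by (simp add: I_def \<mu>_def)
        also have "\<dots> \<le> ennreal (C0 * m)"
          using core' mu by (intro ennreal_leI) (simp add: field_simps)
        finally show "(\<integral>\<^sup>+ x \<in> ball z r. ennreal \<bar>(u x - avg (ball 0 1) u) * \<psi> x - avg (ball z r) (\<lambda>x. (u x - avg (ball 0 1) u) * \<psi> x)\<bar> \<partial>lebesgue) / emeasure lebesgue (ball z r) \<le> ennreal (C0 * m)"
          by (simp add: f_def)
      qed
      also have "\<dots> \<le> ennreal (C * m)"
        using C0 m by (intro ennreal_leI) (simp add: C_def mult_right_mono)
      also have "\<dots> = ennreal C * M"
        using ennreal_mult[of C m] C0 m by (simp add: Mm C_def)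
      also have "\<dots> \<le> ennreal C * (M + Mor)"
        by (intro mult_left_mono) auto
      finally show ?thesis by (simp add: M_def Mor_def)
    qed
  qed
qed

end
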